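(* Consider Janus Quicksort (JQuick), as described in the context, run on $n$ elements with distinct keys distributed over $p$ processes with $n/p$ elements each. A randomly selected input element takes part in more than $20\log_{8/7} p$ distributed levels of recursion before it becomes part of a base case with probability $O(p^{-7})$.
   Context: Janus Quicksort (JQuick) is a recursive distributed-memory sorting algorithm. The input is $n$ elements with pairwise distinct keys, distributed over $p$ processes numbered $0,\dots,p-1$ with exactly $n/p$ elements per process ($n$ a multiple of $p$). The algorithm maintains tasks; a task is a contiguous range of processes together with a contiguous range of the global sorted order of elements that these processes jointly hold, every process holding exactly $n/p$ elements in total, summed over all tasks it belongs to. A process may belong to two tasks at once (a "janus process"), and it then processes both simultaneously. One distributed level of recursion on a task performs four steps: (1) pivot selection: an element of the task chosen uniformly at random is broadcast to all processes of the task; (2) partitioning: each process splits its elements of the task into small elements (smaller than the pivot) and large elements (at least the pivot); (3) data assignment: using prefix sums and broadcasts, the small elements are assigned to a left group consisting of an initial segment of the task's processes and the large elements to a right group consisting of a final segment, such that every process again holds exactly $n/p$ elements in total; the two groups share at most one process (a janus process); (4) data exchange: elements are sent to their assigned processes. Then the left group recursively sorts the small elements and the right group the large elements. A task covering only one or two processes is a base case; base cases are not split further but sorted in a second phase (locally, or by exchanging data between the two processes, selecting, and sorting locally). Here $\log_{8/7}$ denotes logarithm to base $8/7$. *)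

theory Defs
  imports "HOL-Probability.Probability"
begin

text \<open>Keys are distinct, so elements are identified with their ranks 0..n-1.
  With q = n/p elements per process, a task is described by the rank range
  [l, r) of the elements it holds; by the data-assignment invariant of JQuick
  these elements occupy the global storage slots l..r-1, slot i belonging to
  process i div q.  A task is a base case iff it covers at most two processes.\<close>

definition jq_procs :: "nat \<Rightarrow> nat \<Rightarrow> nat \<Rightarrow> nat set" where
  "jq_procs q l r = (\<lambda>i. i div q) ` {l..<r}"

definition jq_base :: "nat \<Rightarrow> nat \<times> nat \<Rightarrow> bool" where
  "jq_base q t = (card (jq_procs q (fst t) (snd t)) \<le> 2)"

text \<open>One distributed level of recursion, followed from the task containing
  element x: a pivot rank k is chosen uniformly from the task; small elements
  (ranks l..k-1) go to the left subtask, large ones (ranks k..r-1) to the right.\<close>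

definition jq_step :: "nat \<Rightarrow> nat \<Rightarrow> nat \<times> nat \<Rightarrow> (nat \<times> nat) pmf" where
  "jq_step q x t =
     (if jq_base q t then return_pmf t
      else map_pmf (\<lambda>k. if x < k then (fst t, k) else (k, snd t))
                   (pmf_of_set {fst t..<snd t}))"

fun jq_task :: "nat \<Rightarrow> nat \<Rightarrow> nat \<Rightarrow> nat \<Rightarrow> (nat \<times> nat) pmf" where
  "jq_task n q x 0 = return_pmf (0, n)"
| "jq_task n q x (Suc d) = bind_pmf (jq_task n q x d) (jq_step q x)"

definition jq_random_elem_task :: "nat \<Rightarrow> nat \<Rightarrow> nat \<Rightarrow> (nat \<times> nat) pmf" where
  "jq_random_elem_task n p d =
     bind_pmf (pmf_of_set {..<n}) (\<lambda>x. jq_task n (n div p) x d)"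

end

theory Submission
  imports Defs
begin

definition F :: "nat \<Rightarrow> nat \<times> nat \<Rightarrow> ennreal" where
  "F q t = (if jq_base q t then 0 else ennreal (real (snd t - fst t)))"

lemma nonbase_size:
  assumes q: "q \<ge> 1" and nb: "\<not> jq_base q t"
  shows "snd t - fst t \<ge> q + 1"
proof (rule ccontr)
  assume "\<not> ?thesis"
  hence s: "snd t < fst t + q + 1" by simp
  have "jq_procs q (fst t) (snd t) \<subseteq> {fst t div q, fst t div q + 1}"
  proof
    fix a assume "a \<in> jq_procs q (fst t) (snd t)"
    then obtain i where i: "fst t \<le> i" "i < snd t" "a = i div q" unfolding jq_procs_def by auto
    have "i \<le> fst t + q" using i s by simp
    hence "i div q \<le> (fst t + q) div q" by (rule div_le_mono)
    also have "\<dots> = fst t div q + 1" using q by simp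
    finally have "a \<le> fst t div q + 1" using i by simp
    moreover have "fst t div q \<le> a" using i div_le_mono by simp
    ultimately show "a \<in> {fst t div q, fst t div q + 1}" by auto
  qed
  hence "card (jq_procs q (fst t) (snd t)) \<le> card {fst t div q, fst t div q + 1}"
    by (rule card_mono[rotated]) simp
  also have "\<dots> \<le> 2" by (simp add: card_insert_if)
  finally show False using nb unfolding jq_base_def by simp
qed

lemma hsum: "4 * (\<Sum>i<s. max i (s - i)) \<le> 3 * s^2 + (s::nat)"
proof (induction s rule: nat_induct2)
  case 0 then show ?case by simp
next
  case 1 then show ?case by simp
next
  case (step s)
  have "(\<Sum>i<Suc (Suc s). max i (Suc (Suc s) - i))
      = Suc (Suc s) + (\<Sum>i<s. max (Suc i) (Suc (Suc s) - Suc i)) + max (Suc s) 1"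
    using sum.lessThan_Suc[of "\<lambda>i. max i (Suc (Suc s) - i)" "Suc s"]
      sum.lessThan_Suc_shift[of "\<lambda>i. max i (Suc (Suc s) - i)" s] by simp
  also have "(\<Sum>i<s. max (Suc i) (Suc (Suc s) - Suc i)) = (\<Sum>i<s. Suc (max i (s - i)))"
    by (rule sum.cong) auto
  also have "\<dots> = (\<Sum>i<s. max i (s - i) + 1)" by simp
  also have "\<dots> = (\<Sum>i<s. max i (s - i)) + (\<Sum>i<s. (1::nat))" by (rule sum.distrib)
  also have "\<dots> = (\<Sum>i<s. max i (s - i)) + s" by simp
  finally have e: "(\<Sum>i<Suc (Suc s). max i (Suc (Suc s) - i)) = (\<Sum>i<s. max i (s - i)) + 3 * s + 3" by simp
  have "4 * (\<Sum>i<Suc (Suc s). max i (Suc (Suc s) - i)) \<le> 3 * (Suc (Suc s))^2 + Suc (Suc s)"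
  proof -
    have "4 * (\<Sum>i<Suc (Suc s). max i (Suc (Suc s) - i)) = 4 * (\<Sum>i<s. max i (s - i)) + 12 * s + 12"
      using e by simp
    also have "\<dots> \<le> 3 * s^2 + s + 12 * s + 12" using step by simp
    also have "\<dots> \<le> 3 * (Suc (Suc s))^2 + Suc (Suc s)" by (simp add: power2_eq_square)
    finally show ?thesis .
  qed
  then show ?case by simp
qed

lemma ksum:
  fixes l r :: nat assumes "l < r" "r - l \<ge> 2"
  shows "8 * (\<Sum>k\<in>{l..<r}. max (k - l) (r - k)) \<le> 7 * (r - l)^2"
proof -
  have "(\<Sum>k\<in>{l..<r}. max (k - l) (r - k)) = (\<Sum>i\<in>{0..<r-l}. max (i + l - l) (r - (i + l)))"
    using sum.shift_bounds_nat_ivl[of "\<lambda>k. max (k - l) (r - k)" 0 l "r - l"] assms by simp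
  also have "\<dots> = (\<Sum>i<r-l. max i ((r - l) - i))"
    by (rule sum.cong) auto
  finally have e: "(\<Sum>k\<in>{l..<r}. max (k - l) (r - k)) = (\<Sum>i<r-l. max i ((r - l) - i))" .
  have "4 * (\<Sum>i<r-l. max i ((r - l) - i)) \<le> 3 * (r-l)^2 + (r - l)" by (rule hsum)
  moreover have "2 * (r - l) \<le> (r-l)^2" using assms by (simp add: power2_eq_square)
  ultimately show ?thesis unfolding e by linarith
qed

lemma step_bound:
  assumes q: "q \<ge> 1"
  shows "(\<integral>\<^sup>+u. F q u \<partial>jq_step q x t) \<le> ennreal (7/8) * F q t"
proof (cases "jq_base q t")
  case True
  then show ?thesis by (simp add: jq_step_def F_def)
next
  case False
  obtain l r where t: "t = (l, r)" by (cases t)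
  have sz: "r - l \<ge> q + 1" using nonbase_size[OF q False] t by simp
  hence lr: "l < r" "r - l \<ge> 2" using q by auto
  define A where "A = (\<Sum>k\<in>{l..<r}. max (k - l) (r - k))"
  have A8: "8 * A \<le> 7 * (r - l)^2" unfolding A_def by (rule ksum[OF lr])
  have ne: "{l..<r} \<noteq> {}" using lr by simp
  have "(\<integral>\<^sup>+u. F q u \<partial>jq_step q x t)
      = (\<integral>\<^sup>+k. F q (if x < k then (l, k) else (k, r)) \<partial>pmf_of_set {l..<r})"
    using False unfolding t jq_step_def by (simp cong: if_cong)
  also have "\<dots> \<le> (\<integral>\<^sup>+k. ennreal (real (max (k - l) (r - k))) \<partial>pmf_of_set {l..<r})"
    by (rule nn_integral_mono) (auto simp: F_def)
  also have "\<dots> = (\<Sum>k\<in>{l..<r}. ennreal (real (max (k - l) (r - k)))) / of_nat (card {l..<r})"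
    by (rule nn_integral_pmf_of_set[OF ne]) simp
  also have "\<dots> = ennreal (real A) / ennreal (real (r - l))"
    unfolding A_def by (simp add: ennreal_of_nat_eq_real_of_nat)
  also have "\<dots> = ennreal (real A / real (r - l))"
    by (rule divide_ennreal) (use lr in auto)
  also have "\<dots> \<le> ennreal (7/8 * real (r - l))"
  proof (rule ennreal_leI)
    have "8 * real A \<le> 7 * real (r - l) * real (r - l)"
    proof -
      have "real (8 * A) \<le> real (7 * (r - l)^2)" using A8 by (simp only: of_nat_le_iff)
      thus ?thesis by (simp add: power2_eq_square)
    qed
    hence "real A \<le> 7/8 * real (r - l) * real (r - l)" by simp
    thus "real A / real (r - l) \<le> 7/8 * real (r - l)" using lr
      by (subst pos_divide_le_eq) auto
  qed
  also have "\<dots> = ennreal (7/8) * ennreal (real (r - l))"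
    by (rule ennreal_mult) simp_all
  also have "\<dots> = ennreal (7/8) * F q t"
    using False t by (simp add: F_def)
  finally show ?thesis .
qed


lemma task_bound:
  assumes q: "q \<ge> 1"
  shows "(\<integral>\<^sup>+u. F q u \<partial>jq_task n q x d) \<le> ennreal ((7/8)^d * real n)"
proof (induction d)
  case 0
  then show ?case by (simp add: F_def)
next
  case (Suc d)
  have "(\<integral>\<^sup>+u. F q u \<partial>jq_task n q x (Suc d))
      = (\<integral>\<^sup>+t. (\<integral>\<^sup>+u. F q u \<partial>jq_step q x t) \<partial>jq_task n q x d)" by simp
  also have "\<dots> \<le> (\<integral>\<^sup>+t. ennreal (7/8) * F q t \<partial>jq_task n q x d)"
    by (rule nn_integral_mono) (rule step_bound[OF q])
  also have "\<dots> = ennreal (7/8) * (\<integral>\<^sup>+t. F q t \<partial>jq_task n q x d)"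
    by (rule nn_integral_cmult) simp
  also have "\<dots> \<le> ennreal (7/8) * ennreal ((7/8)^d * real n)"
    by (rule mult_left_mono[OF Suc]) simp
  also have "\<dots> = ennreal ((7/8)^(Suc d) * real n)"
    by (subst ennreal_mult[symmetric]) (simp_all add: mult.assoc)
  finally show ?case .
qed

lemma markov:
  assumes q: "q \<ge> 1"
  shows "ennreal (real (q+1)) * emeasure (measure_pmf M) {t. \<not> jq_base q t} \<le> (\<integral>\<^sup>+u. F q u \<partial>M)"
proof -
  have "ennreal (real (q+1)) * emeasure (measure_pmf M) {t. \<not> jq_base q t}
     = (\<integral>\<^sup>+u. ennreal (real (q+1)) * indicator {t. \<not> jq_base q t} u \<partial>M)"
    by (rule nn_integral_cmult_indicator[symmetric]) simp
  also have "\<dots> \<le> (\<integral>\<^sup>+u. F q u \<partial>M)"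
  proof (rule nn_integral_mono)
    fix u
    show "ennreal (real (q+1)) * indicator {t. \<not> jq_base q t} u \<le> F q u"
    proof (cases "jq_base q u")
      case True then show ?thesis by (simp add: F_def)
    next
      case False
      have "q + 1 \<le> snd u - fst u" by (rule nonbase_size[OF q False])
      hence "ennreal (real (q+1)) \<le> ennreal (real (snd u - fst u))"
        by (intro ennreal_leI) (simp only: of_nat_le_iff)
      moreover have "F q u = ennreal (real (snd u - fst u))" using False by (simp only: F_def if_False)
      moreover have "ennreal (real (q+1)) * indicator {t. \<not> jq_base q t} u = ennreal (real (q+1))"
        using False by (simp add: indicator_def)
      ultimately show ?thesis by simp
    qed
  qed
  finally show ?thesis .
qed

lemma elem_bound:
  assumes q: "q \<ge> 1" and n: "n > 0"
  shows "ennreal (real (q+1)) * emeasure (measure_pmf (bind_pmf (pmf_of_set {..<n}) (\<lambda>x. jq_task n q x d))) {t. \<not> jq_base q t}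
     \<le> ennreal ((7/8)^d * real n)"
proof -
  let ?A = "{t. \<not> jq_base q t}"
  let ?B = "ennreal ((7/8)^d * real n)"
  have ne: "{..<n} \<noteq> {}" using n by auto
  have "ennreal (real (q+1)) * emeasure (measure_pmf (bind_pmf (pmf_of_set {..<n}) (\<lambda>x. jq_task n q x d))) ?A
     = ennreal (real (q+1)) * (\<integral>\<^sup>+x. emeasure (measure_pmf (jq_task n q x d)) ?A \<partial>pmf_of_set {..<n})"
    by simp
  also have "\<dots> = (\<integral>\<^sup>+x. ennreal (real (q+1)) * emeasure (measure_pmf (jq_task n q x d)) ?A \<partial>pmf_of_set {..<n})"
    by (rule nn_integral_cmult[symmetric]) simp
  also have "\<dots> \<le> (\<integral>\<^sup>+x. ?B \<partial>pmf_of_set {..<n})"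
    by (rule nn_integral_mono) (rule order_trans[OF markov[OF q] task_bound[OF q]])
  also have "\<dots> = ?B"
    by (simp add: measure_pmf.emeasure_space_1)
  finally show ?thesis .
qed

lemma real_part:
  fixes p :: real and d :: nat
  assumes p: "p \<ge> 1" and d: "d = nat \<lfloor>20 * log (8/7) p\<rfloor>"
  shows "(7/8)^d * p \<le> (8/7) / p^7"
proof -
  define L where "L = log (8/7) p"
  have L0: "L \<ge> 0" unfolding L_def using p by simp
  have dL: "real d \<ge> 20 * L - 1"
  proof -
    have "\<lfloor>20 * L\<rfloor> \<ge> 0" using L0 by simp
    hence "real d = real_of_int \<lfloor>20 * L\<rfloor>" unfolding d L_def by simp
    moreover have "real_of_int \<lfloor>20 * L\<rfloor> > 20 * L - 1" by (rule real_of_int_floor_gt_diff_one)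
    ultimately show ?thesis by linarith
  qed
  have "(8/7::real) powr (- real d) = inverse ((8/7) powr real d)"
    by (rule powr_minus)
  also have "(8/7::real) powr real d = (8/7)^d" by (rule powr_realpow) simp
  also have "inverse ((8/7::real)^d) = (7/8)^d" by (subst power_inverse[symmetric]) simp
  finally have e1: "(7/8::real)^d = (8/7) powr (- real d)" by simp
  have "(8/7::real) powr (- real d) \<le> (8/7) powr (1 - 20 * L)"
    by (rule powr_mono) (use dL in auto)
  also have "(8/7::real) powr (1 - 20 * L) = (8/7) powr 1 * ((8/7) powr L) powr (-20)"
    by (simp only: powr_add[symmetric] powr_powr) (simp add: mult.commute)
  also have "(8/7) powr L = p" unfolding L_def using p by simp
  finally have b: "(7/8::real)^d \<le> (8/7) * p powr (-20)" using e1 by simp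
  have p8: "p^8 = p powr 8" using p by (simp add: powr_realpow)
  have "(7/8)^d * p^8 \<le> (8/7) * p powr (-20) * p powr 8"
    unfolding p8 by (rule mult_right_mono[OF b]) simp
  also have "\<dots> = (8/7) * p powr (-12)"
    by (simp only: mult.assoc powr_add[symmetric]) simp
  also have "\<dots> \<le> (8/7) * 1"
  proof -
    have "p powr (-12) \<le> p powr 0" by (rule powr_mono) (use p in auto)
    thus ?thesis using p by simp
  qed
  finally have f: "(7/8)^d * p^8 \<le> 8/7" by simp
  have p7: "p^7 > 0" using p by simp
  have "(7/8)^d * p * p^7 = (7/8)^d * p^8"
  proof -
    have "p * p^7 = p^8" by (simp add: power_eq_if)
    thus ?thesis by (simp only: mult.assoc)
  qed
  with f have "(7/8)^d * p * p^7 \<le> 8/7" by (simp only:)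
  thus ?thesis using p7 by (simp add: pos_le_divide_eq)
qed

theorem lemma1:
  "\<exists>C::real. \<forall>(n::nat) (p::nat). p \<ge> 1 \<longrightarrow> n > 0 \<longrightarrow> p dvd n \<longrightarrow>
     measure_pmf.prob
       (jq_random_elem_task n p (nat \<lfloor>20 * log (8/7) (real p)\<rfloor>))
       {t. \<not> jq_base (n div p) t}
     \<le> C / real p ^ 7"
proof (intro exI allI impI)
  fix n p :: nat
  assume p: "p \<ge> 1" and n: "n > 0" and dv: "p dvd n"
  define q where "q = n div p"
  define d where "d = nat \<lfloor>20 * log (8/7) (real p)\<rfloor>"
  have nq: "n = p * q" unfolding q_def using dv by simp
  have q: "q \<ge> 1" using nq n by (cases q) auto
  define M where "M = jq_random_elem_task n p d"
  define P where "P = measure_pmf.prob M {t. \<not> jq_base q t}"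
  have "ennreal (real (q+1)) * emeasure (measure_pmf M) {t. \<not> jq_base q t}
      \<le> ennreal ((7/8)^d * real n)"
    unfolding M_def jq_random_elem_task_def q_def[symmetric] by (rule elem_bound[OF q n])
  moreover have "emeasure (measure_pmf M) {t. \<not> jq_base q t} = ennreal P"
    unfolding P_def by (rule measure_pmf.emeasure_eq_measure)
  moreover have "ennreal (real (q+1) * P) = ennreal (real (q+1)) * ennreal P"
    by (rule ennreal_mult) (simp_all add: P_def)
  ultimately have "ennreal (real (q+1) * P) \<le> ennreal ((7/8)^d * real n)"
    by (simp only:)
  hence le: "real (q+1) * P \<le> (7/8)^d * real n" by (subst (asm) ennreal_le_iff) simp_all
  have "(7/8)^d * real n = ((7/8)^d * real p) * real q" using nq by simp
  also have "\<dots> \<le> ((7/8)^d * real p) * real (q+1)" by (intro mult_left_mono) simp_all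
  finally have X: "(7/8)^d * real n \<le> ((7/8)^d * real p) * real (q+1)" .
  have "real (q+1) * P \<le> real (q+1) * ((7/8)^d * real p)"
    using order_trans[OF le X] by (simp only: mult.commute)
  hence "P \<le> (7/8)^d * real p" by (rule mult_left_le_imp_le) simp
  also have "\<dots> \<le> (8/7) / real p ^ 7"
    by (rule real_part) (use p d_def in auto)
  finally show "measure_pmf.prob
       (jq_random_elem_task n p (nat \<lfloor>20 * log (8/7) (real p)\<rfloor>))
       {t. \<not> jq_base (n div p) t} \<le> (8/7) / real p ^ 7"
    unfolding P_def M_def d_def q_def .
qed

end
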